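(* Let $\alpha\in(0,1)$ and let $f_k$ ($k\in\mathbb N$) be as in an admissible system. Then $\left\|\mathbb W_n^{(\mathbf S)}(f)\right\|_\infty\to0$ in measure as $n\to\infty$, where $\mathbb W_n^{(\mathbf S)}(f):=\sum_{1\le k\le\frac1{2\alpha}\log n}\mathbb W_n(f_k)$.
   Context: $(\mathcal X,\mathcal B,m,T)$ is an ergodic, aperiodic probability preserving system; $\log$ is base $2$. $S_n(h):=\sum_{j=0}^{n-1}h\circ T^j$; $\mathbb W_n(h)(t):=n^{-1/\alpha}S_{\lfloor nt\rfloor}(h)$, $t\in[0,1]$; $\|\cdot\|_\infty$ is the supremum over $t\in[0,1]$. $S_\alpha(\sigma,\beta,\mu)$ denotes the stable law with characteristic function $\exp\{-\sigma^\alpha|\theta|^\alpha(1-i\beta\,\mathrm{sign}(\theta)\tan(\pi\alpha/2))+i\mu\theta\}$ ($\alpha\neq1$). Triangular array: on $(\Omega,\mathcal F,\mathbb P)$ let $\{X_k(m):k,m\in\mathbb N\}$ be independent with $X_k(m)\sim S_\alpha(k^{-1/\alpha},1,0)$; $Y_k(m):=X_k(m)\mathbf 1_{[2^k\le X_k(m)\le4^k]}$; $Z_k(m):=\sum_{j=8^k}^{16^k}\frac{j}{4^k}\mathbf 1_{[j/4^k\le Y_k(m)<(j+1)/4^k]}$. Let $d_k:=4^{k^2}$. An admissible system is a sequence of measurable $f_k:\mathcal X\to\mathbb R$ such that the family $\{f_k\circ T^j:k\in\mathbb N,0\le j<2d_k\}$ has under $m$ the same joint distribution as $\{Z_k(j+1):k\in\mathbb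 N,0\le j<2d_k\}$, together with $g_k:=f_k\circ T^{d_k}$. *)

theory Defs
  imports "HOL-Probability.Probability"
begin

text \<open>Stable law S_alpha(sigma, beta, mu) (alpha \<noteq> 1), identified by its characteristic function.\<close>
definition stable_law :: "real \<Rightarrow> real \<Rightarrow> real \<Rightarrow> real \<Rightarrow> real measure \<Rightarrow> bool" where
  "stable_law \<alpha> \<sigma> \<beta> \<mu> N \<longleftrightarrow> real_distribution N \<and>
     (\<forall>\<theta>::real. char N \<theta> =
        exp (- complex_of_real (\<sigma> powr \<alpha> * \<bar>\<theta>\<bar> powr \<alpha>)
               * (1 - \<i> * complex_of_real (\<beta> * sgn \<theta> * tan (pi * \<alpha> / 2)))
             + \<i> * complex_of_real (\<mu> * \<theta>)))"

definition Ytr :: "nat \<Rightarrow> real \<Rightarrow> real" where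
  "Ytr k x = (if 2 ^ k \<le> x \<and> x \<le> 4 ^ k then x else 0)"

definition Zdisc :: "nat \<Rightarrow> real \<Rightarrow> real" where
  "Zdisc k x = (\<Sum>j = 8 ^ k .. 16 ^ k.
      real j / 4 ^ k * (if real j / 4 ^ k \<le> Ytr k x \<and> Ytr k x < (real j + 1) / 4 ^ k then 1 else 0))"

definition dseq :: "nat \<Rightarrow> nat" where
  "dseq k = 4 ^ (k\<^sup>2)"

definition adm_index :: "(nat \<times> nat) set" where
  "adm_index = {(k, j). 1 \<le> k \<and> j < 2 * dseq k}"

definition ergodic_mp :: "'a measure \<Rightarrow> ('a \<Rightarrow> 'a) \<Rightarrow> bool" where
  "ergodic_mp M T \<longleftrightarrow> T \<in> measurable M M \<and> distr M M T = M \<and>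
     (\<forall>A \<in> sets M. T -` A \<inter> space M = A \<longrightarrow> measure M A = 0 \<or> measure M A = 1)"

definition aperiodic :: "'a measure \<Rightarrow> ('a \<Rightarrow> 'a) \<Rightarrow> bool" where
  "aperiodic M T \<longleftrightarrow> (AE x in M. \<forall>n::nat. n > 0 \<longrightarrow> (T ^^ n) x \<noteq> x)"

definition birk :: "('a \<Rightarrow> 'a) \<Rightarrow> nat \<Rightarrow> ('a \<Rightarrow> real) \<Rightarrow> 'a \<Rightarrow> real" where
  "birk T n h x = (\<Sum>j<n. h ((T ^^ j) x))"

definition Wproc :: "real \<Rightarrow> ('a \<Rightarrow> 'a) \<Rightarrow> nat \<Rightarrow> ('a \<Rightarrow> real) \<Rightarrow> real \<Rightarrow> 'a \<Rightarrow> real" where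
  "Wproc \<alpha> T n h t x = real n powr (- 1 / \<alpha>) * birk T (nat \<lfloor>real n * t\<rfloor>) h x"

definition WS :: "real \<Rightarrow> ('a \<Rightarrow> 'a) \<Rightarrow> nat \<Rightarrow> (nat \<Rightarrow> 'a \<Rightarrow> real) \<Rightarrow> real \<Rightarrow> 'a \<Rightarrow> real" where
  "WS \<alpha> T n f t x = (\<Sum>k \<in> {k::nat. 1 \<le> k \<and> real k \<le> log 2 (real n) / (2 * \<alpha>)}. Wproc \<alpha> T n (f k) t x)"

end

theory Submission
  imports Defs
begin

lemma exp_minus_one_bound:
  fixes z :: complex assumes "Re z \<le> 0"
  shows "norm (1 - exp z) \<le> norm z"
proof -
  have "norm (exp z - exp 0) \<le> 1 * norm (z - 0)"
    by (rule field_differentiable_bound[OF convex_halfspace_Re_le[of 0], of exp exp])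
       (auto intro!: derivative_eq_intros simp: assms)
  thus ?thesis by (simp add: norm_minus_commute)
qed

lemma char_tail_bound:
  assumes N: "real_distribution N" and u: "u > 0"
    and B: "\<And>t. \<bar>t\<bar> \<le> u \<Longrightarrow> cmod (1 - char N t) \<le> B"
  shows "measure N {x. \<bar>x\<bar> \<ge> 2 / u} \<le> 2 * B"
proof -
  interpret Mn: real_distribution N by fact
  have *: "\<And>u x. u > 0 \<Longrightarrow> x \<noteq> 0 \<Longrightarrow> (CLBINT t:{-u..u}. 1 - iexp (t * x)) =
      2 * (u  - sin (u * x) / x)"
  proof -
    fix u :: real and x :: real
    assume "u > 0" and "x \<noteq> 0"
    hence "(CLBINT t:{-u..u}. 1 - iexp (t * x)) = (CLBINT t=-u..u. 1 - iexp (t * x))"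
      by (subst interval_integral_Icc, auto)
    also have "\<dots> = (CLBINT t=-u..ereal 0. 1 - iexp (t * x)) + (CLBINT t= ereal 0..u. 1 - iexp (t * x))"
      using \<open>u > 0\<close>
      by (subst interval_integral_sum; force simp add: interval_integrable_isCont)
    also have "\<dots> = (CLBINT t=ereal 0..u. 1 - iexp (t * -x)) + (CLBINT t=ereal 0..u. 1 - iexp (t * x))"
      by (subst interval_integral_reflect, auto)
    also have "... = CLBINT xa=ereal 0..ereal u. 1 - iexp (xa * - x) + (1 - iexp (xa * x))"
      by (subst interval_lebesgue_integral_add (2) [symmetric]) (auto simp: interval_integrable_isCont)
    also have "\<dots> = (LBINT t=ereal 0..u. 2 - 2 * cos (t * x))"
      unfolding exp_Euler cos_of_real by (simp flip: interval_lebesgue_integral_of_real)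
    also have "\<dots> = 2 * u - 2 * sin (u * x) / x"
      by (subst interval_lebesgue_integral_diff)
         (auto intro!: interval_integrable_isCont
               simp: interval_lebesgue_integral_of_real integral_cos [OF \<open>x \<noteq> 0\<close>] mult.commute[of _ x])
    finally show "(CLBINT t:{-u..u}. 1 - iexp (t * x)) = 2 * (u  - sin (u * x) / x)"
      by (simp add: field_simps)
  qed
  have main_bound: "Re (CLBINT t:{-u..u}. 1 - char N t) \<ge>
    u * measure N {x. abs x \<ge> 2 / u}"
  proof -
    interpret P: pair_sigma_finite "N" lborel ..
    have Mn1 [simp]: "measure N UNIV = 1" by (metis Mn.prob_space Mn.space_eq_univ)
    have Mn2 [simp]: "\<And>x. complex_integrable N (\<lambda>t. exp (\<i> * complex_of_real (x * t)))"
      by (rule Mn.integrable_const_bound [where B = 1], auto)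
    have Mn3: "set_integrable (N \<Otimes>\<^sub>M lborel) (UNIV \<times> {- u..u}) (\<lambda>a. 1 - exp (\<i> * complex_of_real (snd a * fst a)))"
      using \<open>0 < u\<close>
      unfolding set_integrable_def
      by (intro integrableI_bounded_set_indicator [where B="2"])
         (auto simp: lborel.emeasure_pair_measure_Times ennreal_mult_less_top not_less top_unique
               split: split_indicator
               intro!: order_trans [OF norm_triangle_ineq4])
    have "(CLBINT t:{-u..u}. 1 - char N t) =
        (CLBINT t:{-u..u}. (CLINT x | N. 1 - iexp (t * x)))"
      unfolding char_def by (rule set_lebesgue_integral_cong, auto simp del: of_real_mult)
    also have "\<dots> = (CLBINT t. (CLINT x | N. indicator {-u..u} t *\<^sub>R (1 - iexp (t * x))))"
      unfolding set_lebesgue_integral_def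
      by (rule Bochner_Integration.integral_cong) (auto split: split_indicator)
    also have "\<dots> = (CLINT x | N. (CLBINT t:{-u..u}. 1 - iexp (t * x)))"
      using Mn3 by (subst P.Fubini_integral) (auto simp: indicator_times split_beta' set_integrable_def set_lebesgue_integral_def)
    also have "\<dots> = (CLINT x | N. (if x = 0 then 0 else 2 * (u  - sin (u * x) / x)))"
      using \<open>u > 0\<close> by (intro Bochner_Integration.integral_cong, auto simp add: * simp del: of_real_mult)
    also have "\<dots> = (LINT x | N. (if x = 0 then 0 else 2 * (u  - sin (u * x) / x)))"
      by (rule integral_complex_of_real)
    finally have "Re (CLBINT t:{-u..u}. 1 - char N t) =
       (LINT x | N. (if x = 0 then 0 else 2 * (u  - sin (u * x) / x)))" by simp
    also have "\<dots> \<ge> (LINT x : {x. abs x \<ge> 2 / u} | N. u)"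
    proof -
      have "complex_integrable N (\<lambda>x. CLBINT t:{-u..u}. 1 - iexp (snd (x, t) * fst (x, t)))"
        using Mn3 unfolding set_integrable_def set_lebesgue_integral_def
        by (intro P.integrable_fst) (simp add: indicator_times split_beta')
      hence "complex_integrable N (\<lambda>x. if x = 0 then 0 else 2 * (u  - sin (u * x) / x))"
        using \<open>u > 0\<close>
        unfolding set_integrable_def
        by (subst Bochner_Integration.integrable_cong) (auto simp add: * simp del: of_real_mult)
      hence **: "integrable N (\<lambda>x. if x = 0 then 0 else 2 * (u  - sin (u * x) / x))"
        unfolding complex_of_real_integrable_eq .
      have "2 * sin x \<le> x" if "2 \<le> x" for x :: real
        by (rule order_trans[OF _ \<open>2 \<le> x\<close>]) auto
      moreover have "x \<le> 2 * sin x" if "x \<le> - 2" for x :: real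
        by (rule order_trans[OF \<open>x \<le> - 2\<close>]) auto
      moreover have "x < 0 \<Longrightarrow> x \<le> sin x" for x :: real
        using sin_x_le_x[of "-x"] by simp
      ultimately show ?thesis
        using \<open>u > 0\<close> unfolding set_lebesgue_integral_def
        by (intro integral_mono [OF _ **])
           (auto simp: divide_simps sin_x_le_x mult.commute[of u] mult_neg_pos top_unique less_top[symmetric]
                 split: split_indicator)
    qed
    also (xtrans) have "(LINT x : {x. abs x \<ge> 2 / u} | N. u) = u * measure N {x. abs x \<ge> 2 / u}"
      unfolding set_lebesgue_integral_def
      by (simp add: Mn.emeasure_eq_measure)
    finally show ?thesis .
  qed
  have int: "set_integrable lborel {-u..u} (\<lambda>t. 1 - char N t)"
    by (intro borel_integrable_atLeastAtMost' continuous_at_imp_continuous_on)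
       (auto intro!: continuous_intros Mn.isCont_char)
  have "Re (CLBINT t:{-u..u}. 1 - char N t) \<le> cmod (CLBINT t:{-u..u}. 1 - char N t)"
    by (rule complex_Re_le_cmod)
  also have "\<dots> \<le> (LBINT t:{-u..u}. cmod (1 - char N t))"
    by (rule set_integral_norm_bound[OF int])
  also have "\<dots> \<le> (LBINT t:{-u..u}. B)"
    using B int
    by (intro set_integral_mono) (auto simp: set_integrable_norm intro!: borel_integrable_atLeastAtMost' continuous_on_const)
  also have "\<dots> = 2 * u * B"
    using u by (subst set_integral_const) auto
  finally have "u * measure N {x. \<bar>x\<bar> \<ge> 2 / u} \<le> u * (2 * B)"
    using main_bound by simp
  thus ?thesis using u by simp
qed

lemma stable_tail:
  assumes st: "stable_law \<alpha> \<sigma> 1 0 N" and a: "0 < \<alpha>" "\<alpha> < 1" and s: "0 < \<sigma>" and x: "0 < x"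
  shows "measure N {y. x \<le> \<bar>y\<bar>} \<le> 4 * (1 + \<bar>tan (pi * \<alpha> / 2)\<bar>) * \<sigma> powr \<alpha> * x powr (-\<alpha>)"
proof -
  define c where "c = tan (pi * \<alpha> / 2)"
  have N: "real_distribution N" using st by (simp add: stable_law_def)
  have ch: "char N t = exp (- complex_of_real (\<sigma> powr \<alpha> * \<bar>t\<bar> powr \<alpha>) * (1 - \<i> * complex_of_real (sgn t * c)))" for t
    using st by (simp add: stable_law_def c_def)
  define u where "u = 2 / x"
  have u: "u > 0" using x by (simp add: u_def)
  have B: "cmod (1 - char N t) \<le> \<sigma> powr \<alpha> * u powr \<alpha> * (1 + \<bar>c\<bar>)" if t: "\<bar>t\<bar> \<le> u" for t
  proof -
    define z where "z = - complex_of_real (\<sigma> powr \<alpha> * \<bar>t\<bar> powr \<alpha>) * (1 - \<i> * complex_of_real (sgn t * c))"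
    have Rez: "Re z = - (\<sigma> powr \<alpha> * \<bar>t\<bar> powr \<alpha>)" by (simp add: z_def)
    have "cmod (1 - char N t) \<le> cmod z" unfolding ch z_def[symmetric]
      by (rule exp_minus_one_bound) (simp add: Rez)
    also have "\<dots> = (\<sigma> powr \<alpha> * \<bar>t\<bar> powr \<alpha>) * cmod (1 - \<i> * complex_of_real (sgn t * c))"
      by (simp add: z_def norm_mult)
    also have "cmod (1 - \<i> * complex_of_real (sgn t * c)) \<le> 1 + \<bar>c\<bar>"
    proof -
      have "cmod (1 - \<i> * complex_of_real (sgn t * c)) \<le> cmod 1 + cmod (\<i> * complex_of_real (sgn t * c))"
        by (rule norm_triangle_ineq4)
      also have "\<dots> \<le> 1 + \<bar>c\<bar>" by (simp add: norm_mult abs_mult sgn_if)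
      finally show ?thesis .
    qed
    hence "(\<sigma> powr \<alpha> * \<bar>t\<bar> powr \<alpha>) * cmod (1 - \<i> * complex_of_real (sgn t * c)) \<le> (\<sigma> powr \<alpha> * \<bar>t\<bar> powr \<alpha>) * (1 + \<bar>c\<bar>)"
      by (intro mult_left_mono) auto
    also have "\<dots> \<le> (\<sigma> powr \<alpha> * u powr \<alpha>) * (1 + \<bar>c\<bar>)"
      using t a by (intro mult_right_mono mult_left_mono powr_mono2) auto
    finally show ?thesis by simp
  qed
  have "measure N {y. \<bar>y\<bar> \<ge> 2 / u} \<le> 2 * (\<sigma> powr \<alpha> * u powr \<alpha> * (1 + \<bar>c\<bar>))"
    by (rule char_tail_bound[OF N u B])
  also have "u powr \<alpha> = 2 powr \<alpha> * x powr (-\<alpha>)"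
    using x by (simp add: u_def powr_divide powr_minus_divide)
  also have "2 powr \<alpha> \<le> 2" using a powr_mono[of \<alpha> 1 2] by simp
  hence "2 * (\<sigma> powr \<alpha> * (2 powr \<alpha> * x powr (-\<alpha>)) * (1 + \<bar>c\<bar>)) \<le> 2 * (\<sigma> powr \<alpha> * (2 * x powr (-\<alpha>)) * (1 + \<bar>c\<bar>))"
    by (intro mult_left_mono mult_right_mono) auto
  finally show ?thesis using x by (simp add: u_def c_def algebra_simps)
qed

lemma Ytr_nonneg: "0 \<le> Ytr k x"
  by (auto simp: Ytr_def intro: order_trans[rotated])

lemma Zdisc_nonneg: "0 \<le> Zdisc k x"
  unfolding Zdisc_def by (intro sum_nonneg) auto

lemma Zdisc_le_Ytr: "Zdisc k x \<le> Ytr k x"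
proof -
  define c where "c = (\<lambda>j::nat. real j / 4 ^ k \<le> Ytr k x \<and> Ytr k x < (real j + 1) / 4 ^ k)"
  have eq: "Zdisc k x = (\<Sum>j \<in> {8 ^ k .. 16 ^ k} \<inter> {j. c j}. real j / 4 ^ k)"
    unfolding Zdisc_def c_def[symmetric]
    by (simp add: sum.inter_restrict if_distrib c_def cong: if_cong)
  have uniq: "j = j'" if "c j" "c j'" for j j'
  proof -
    have "real j / 4^k < (real j' + 1) / 4^k" "real j' / 4^k < (real j + 1) / 4^k"
      using that unfolding c_def by linarith+
    hence "real j < real j' + 1" "real j' < real j + 1" by (simp_all add: divide_strict_right_mono_neg field_simps)
    thus ?thesis by linarith
  qed
  show ?thesis
  proof (cases "\<exists>j \<in> {8 ^ k .. 16 ^ k}. c j")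
    case False
    hence "{8 ^ k .. 16 ^ k} \<inter> {j. c j} = {}" by auto
    thus ?thesis using eq Ytr_nonneg[of k x] by simp
  next
    case True
    then obtain j where j: "j \<in> {8 ^ k .. 16 ^ k}" "c j" by blast
    hence "{8 ^ k .. 16 ^ k} \<inter> {j. c j} = {j}" using uniq by blast
    thus ?thesis using eq j(2) by (simp add: c_def)
  qed
qed

lemma dyadic_bound:
  fixes x :: real
  assumes "a \<le> b" "2 ^ a \<le> x" "x \<le> 2 ^ b"
  shows "x \<le> (\<Sum>i\<in>{a..b}. 2 ^ (i+1) * indicator {y. 2 ^ i \<le> y} x)"
  using assms
proof (induction b rule: dec_induct)
  case base
  hence "x = 2 ^ a" by simp
  thus ?case by (simp add: indicator_def)
next
  case (step b)
  have nn: "\<And>i. 0 \<le> (2::real) ^ (i+1) * indicator {y. 2 ^ i \<le> y} x" by simp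
  have split: "(\<Sum>i\<in>{a..Suc b}. (2::real) ^ (i+1) * indicator {y::real. 2 ^ i \<le> y} x) =
     (\<Sum>i\<in>{a..b}. (2::real) ^ (i+1) * indicator {y::real. 2 ^ i \<le> y} x) + (2::real) ^ (Suc b + 1) * indicator {y::real. 2 ^ Suc b \<le> y} x"
    using step(1) by (subst sum.cl_ivl_Suc) simp
  show ?case
  proof (cases "x \<le> 2 ^ b")
    case True
    with step have "x \<le> (\<Sum>i\<in>{a..b}. 2 ^ (i+1) * indicator {y. 2 ^ i \<le> y} x)" by simp
    thus ?thesis unfolding split using nn[of "Suc b"] by linarith
  next
    case False
    have "x \<le> 2 ^ (b+1) * indicator {y::real. 2 ^ b \<le> y} x" using False step by (simp add: indicator_def)
    also have "\<dots> \<le> (\<Sum>i\<in>{a..b}. 2 ^ (i+1) * indicator {y. 2 ^ i \<le> y} x)"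
      by (rule member_le_sum[of b _ "\<lambda>i. 2 ^ (i+1) * indicator {y::real. 2 ^ i \<le> y} x"]) (use step(1) in auto)
    finally show ?thesis unfolding split using nn[of "Suc b"] by linarith
  qed
qed

lemma Ytr_dyadic: "Ytr k x \<le> (\<Sum>i\<in>{k..2*k}. 2 ^ (i+1) * indicator {y. 2 ^ i \<le> y} x)"
proof (cases "2 ^ k \<le> x \<and> x \<le> 4 ^ k")
  case True
  have "(4::real) ^ k = 2 ^ (2*k)" by (simp add: power_mult)
  thus ?thesis using True dyadic_bound[of k "2*k" x] by (simp add: Ytr_def)
qed (auto simp: Ytr_def intro!: sum_nonneg)

lemma Zdisc_measurable[measurable]: "Zdisc k \<in> borel_measurable borel"
  unfolding Zdisc_def Ytr_def by measurable

definition qa :: "real \<Rightarrow> real" where "qa \<alpha> = 2 powr (1 - \<alpha>)"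
definition Cz :: "real \<Rightarrow> real" where
  "Cz \<alpha> = 8 * (1 + \<bar>tan (pi * \<alpha> / 2)\<bar>) * qa \<alpha> / (qa \<alpha> - 1)"

lemma qa_gt1: "\<alpha> < 1 \<Longrightarrow> qa \<alpha> > 1"
  unfolding qa_def using powr_less_mono[of 0 "1-\<alpha>" 2] by simp

lemma geom_bound:
  fixes q :: real assumes q: "q > 1"
  shows "(\<Sum>i\<in>{k..2*k}. q ^ i) \<le> q * (q^2) ^ k / (q - 1)"
proof -
  have "(\<Sum>i\<in>{k..2*k}. q ^ i) \<le> (\<Sum>i<2*k+1. q ^ i)"
    using q by (intro sum_mono2) auto
  also have "\<dots> = (q ^ (2*k+1) - 1) / (q - 1)"
    using q by (subst geometric_sum) auto
  also have "\<dots> \<le> q ^ (2*k+1) / (q - 1)"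
    using q by (intro divide_right_mono) auto
  also have "q ^ (2*k+1) = q * (q^2)^k" by (simp add: power_mult)
  finally show ?thesis .
qed

lemma EZ_bound:
  assumes st: "stable_law \<alpha> (real k powr (-1/\<alpha>)) 1 0 N" and a: "0 < \<alpha>" "\<alpha> < 1" and k: "1 \<le> k"
  shows "(\<integral>x. Zdisc k x \<partial>N) \<le> Cz \<alpha> * (qa \<alpha> ^ 2) ^ k / real k"
proof -
  define L where "L = 4 * (1 + \<bar>tan (pi * \<alpha> / 2)\<bar>)"
  define q where "q = qa \<alpha>"
  have q1: "q > 1" using a by (simp add: q_def qa_gt1)
  interpret N: real_distribution N using st by (simp add: stable_law_def)
  define g where "g = (\<lambda>x. \<Sum>i\<in>{k..2*k}. (2::real) ^ (i+1) * indicator {y::real. 2 ^ i \<le> y} x)"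
  have gint: "integrable N g" unfolding g_def
    by (intro Bochner_Integration.integrable_sum integrable_mult_right integrable_real_indicator) (auto simp: N.emeasure_space_1 N.emeasure_eq_measure)
  have ptw: "Zdisc k x \<le> g x" for x
    unfolding g_def by (rule order_trans[OF Zdisc_le_Ytr Ytr_dyadic])
  have Zint: "integrable N (Zdisc k)"
  proof (rule Bochner_Integration.integrable_bound[OF gint])
    show "AE x in N. norm (Zdisc k x) \<le> norm (g x)"
      using Zdisc_nonneg ptw by (auto intro!: AE_I2 order_trans[OF _ abs_ge_self])
  qed simp
  have "(\<integral>x. Zdisc k x \<partial>N) \<le> (\<integral>x. g x \<partial>N)"
    using Zint gint ptw by (intro integral_mono) auto
  also have "\<dots> = (\<Sum>i\<in>{k..2*k}. 2 ^ (i+1) * measure N {y::real. 2 ^ i \<le> y})"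
    unfolding g_def
    by (subst Bochner_Integration.integral_sum) (auto simp: N.emeasure_space_1 N.emeasure_eq_measure)
  also have "\<dots> \<le> (\<Sum>i\<in>{k..2*k}. 2 ^ (i+1) * (L * (real k powr (-1/\<alpha>)) powr \<alpha> * (2 ^ i) powr (-\<alpha>)))"
  proof (intro sum_mono mult_left_mono)
    fix i
    have "measure N {y::real. 2 ^ i \<le> y} \<le> measure N {y. 2 ^ i \<le> \<bar>y\<bar>}"
      by (intro N.finite_measure_mono) auto
    also have "\<dots> \<le> L * (real k powr (-1/\<alpha>)) powr \<alpha> * (2 ^ i) powr (-\<alpha>)"
      unfolding L_def using k a by (intro stable_tail[OF st]) auto
    finally show "measure N {y::real. 2 ^ i \<le> y} \<le> L * (real k powr (-1/\<alpha>)) powr \<alpha> * (2 ^ i) powr (-\<alpha>)" .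
  qed simp
  also have "\<dots> = (2 * L / real k) * (\<Sum>i\<in>{k..2*k}. q ^ i)"
  proof -
    have pk: "(real k powr (-1/\<alpha>)) powr \<alpha> = 1 / real k"
    proof -
      have "(real k powr (-1/\<alpha>)) powr \<alpha> = real k powr (-1/\<alpha> * \<alpha>)" by (simp add: powr_powr)
      also have "-1/\<alpha> * \<alpha> = -1" using a by simp
      finally show ?thesis using k by (simp add: powr_minus_divide)
    qed
    have "2 ^ (i+1) * ((2::real) ^ i) powr (-\<alpha>) = 2 * q ^ i" for i
    proof -
      have "(2::real) ^ i * (2 ^ i) powr (-\<alpha>) = (2 ^ i) powr (1 - \<alpha>)"
        by (simp add: powr_diff powr_minus_divide)
      also have "\<dots> = q ^ i"
      proof -
        have e1: "(2::real)^i = 2 powr real i" by (simp add: powr_realpow)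
        have e2: "(2 powr (1-\<alpha>))^i = (2 powr (1-\<alpha>)) powr real i" by (simp add: powr_realpow)
        show ?thesis unfolding q_def qa_def e1 e2 powr_powr by (simp add: mult.commute)
      qed
      finally show ?thesis by simp
    qed
    thus ?thesis unfolding pk by (simp add: sum_distrib_left algebra_simps)
  qed
  also have "\<dots> \<le> (2 * L / real k) * (q * (q^2) ^ k / (q - 1))"
    using q1 k by (intro mult_left_mono geom_bound) (auto simp: L_def)
  also have "\<dots> = Cz \<alpha> * (qa \<alpha> ^ 2) ^ k / real k"
    by (simp add: Cz_def L_def q_def mult.commute mult.left_commute mult.assoc)
  finally show ?thesis .
qed

definition Sa :: "real \<Rightarrow> real" where "Sa a = (\<Sum>i. real (Suc i) * (1/a)^i)"

lemma Sa_summable: assumes "a > 1" shows "summable (\<lambda>i. real (Suc i) * (1/a)^i)"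
proof -
  have "summable (\<lambda>n. diffs (\<lambda>_. 1::real) n * (1/a) ^ n)"
    by (rule termdiff_converges[where K=1]) (use assms in \<open>auto intro!: summable_geometric\<close>)
  thus ?thesis by (simp add: diffs_def)
qed

lemma sum_bound:
  fixes a :: real assumes a: "a > 1"
  shows "(\<Sum>k\<in>{1..K}. a^k / real k) \<le> Sa a * a^K / real K"
proof (cases "K = 0")
  case True thus ?thesis by simp
next
  case False
  have "(\<Sum>k\<in>{1..K}. a^k / real k) = (\<Sum>i<K. a^(Suc i) / real (Suc i))"
  proof -
    show ?thesis by (simp add: sum.atLeast1_atMost_eq)
  qed
  also have "\<dots> = (\<Sum>i<K. a^(Suc (K - Suc i)) / real (Suc (K - Suc i)))"
    by (rule sum.nat_diff_reindex[symmetric])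
  also have "\<dots> \<le> (\<Sum>i<K. a^K / real K * (real (Suc i) * (1/a)^i))"
  proof (rule sum_mono)
    fix i assume i: "i \<in> {..<K}"
    have e: "Suc (K - Suc i) = K - i" using i by auto
    have p: "a^(K - i) = a^K * (1/a)^i"
      using i a by (simp add: power_diff power_one_over field_simps)
    have "1 / real (K - i) \<le> real (Suc i) / real K"
    proof -
      have "real K \<le> real (Suc i) * real (K - i)"
      proof -
        have "i * 1 \<le> i * (K - i)" using i by (intro mult_le_mono2) auto
        moreover have "Suc i * (K - i) = (K - i) + i * (K - i)" by simp
        moreover have "K = (K - i) + i" using i by simp
        ultimately have "K \<le> Suc i * (K - i)" by linarith
        thus ?thesis by (metis of_nat_le_iff of_nat_mult)
      qed
      thus ?thesis using i False by (simp add: field_simps)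
    qed
    hence "a^K * (1/a)^i * (1 / real (K - i)) \<le> a^K * (1/a)^i * (real (Suc i) / real K)"
      using a by (intro mult_left_mono) auto
    thus "a^(Suc (K - Suc i)) / real (Suc (K - Suc i)) \<le> a^K / real K * (real (Suc i) * (1/a)^i)"
      unfolding e p by (simp add: field_simps)
  qed
  also have "\<dots> = a^K / real K * (\<Sum>i<K. real (Suc i) * (1/a)^i)"
    by (simp add: sum_distrib_left)
  also have "\<dots> \<le> a^K / real K * Sa a"
    unfolding Sa_def using a
    by (intro mult_left_mono sum_le_suminf Sa_summable) auto
  finally show ?thesis by (simp add: mult.commute)
qed

definition Kf :: "real \<Rightarrow> nat \<Rightarrow> nat" where "Kf \<alpha> n = nat \<lfloor>log 2 (real n) / (2 * \<alpha>)\<rfloor>"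

lemma pow_bound:
  assumes a: "0 < \<alpha>" "\<alpha> < 1" and n: "1 \<le> n"
  shows "real n powr (1 - 1/\<alpha>) * (qa \<alpha> ^ 2) ^ (Kf \<alpha> n) \<le> 1"
proof -
  define c where "c = 2 * (1 - \<alpha>)"
  have lg: "log 2 (real n) \<ge> 0" using n by simp
  have K: "real (Kf \<alpha> n) \<le> log 2 (real n) / (2 * \<alpha>)"
  proof -
    have "0 \<le> log 2 (real n) / (2 * \<alpha>)" using lg a by simp
    hence "real (Kf \<alpha> n) = real_of_int \<lfloor>log 2 (real n) / (2 * \<alpha>)\<rfloor>" unfolding Kf_def by simp
    thus ?thesis by linarith
  qed
  have q2: "qa \<alpha> ^ 2 = 2 powr c" unfolding qa_def c_def
    by (simp add: power2_eq_square flip: powr_add)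
  have "(qa \<alpha> ^ 2) ^ (Kf \<alpha> n) = 2 powr (c * real (Kf \<alpha> n))"
    unfolding q2 by (simp add: powr_powr flip: powr_realpow)
  also have "\<dots> \<le> 2 powr (c * (log 2 (real n) / (2 * \<alpha>)))"
    using K a by (intro powr_mono mult_left_mono) (auto simp: c_def)
  also have "c * (log 2 (real n) / (2 * \<alpha>)) = log 2 (real n) * ((1 - \<alpha>) / \<alpha>)"
    using a by (simp add: c_def field_simps)
  also have "2 powr (log 2 (real n) * ((1 - \<alpha>) / \<alpha>)) = real n powr ((1 - \<alpha>) / \<alpha>)"
  proof -
    have "2 powr (log 2 (real n) * ((1 - \<alpha>) / \<alpha>)) = (2 powr log 2 (real n)) powr ((1 - \<alpha>) / \<alpha>)"
      by (rule powr_powr[symmetric])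
    also have "2 powr log 2 (real n) = real n" using n by simp
    finally show ?thesis .
  qed
  finally have "real n powr (1 - 1/\<alpha>) * (qa \<alpha> ^ 2) ^ (Kf \<alpha> n) \<le> real n powr (1 - 1/\<alpha>) * real n powr ((1 - \<alpha>) / \<alpha>)"
    by (intro mult_left_mono) auto
  also have "\<dots> = real n powr ((1 - 1/\<alpha>) + (1 - \<alpha>) / \<alpha>)" by (simp add: powr_add)
  also have "(1 - 1/\<alpha>) + (1 - \<alpha>) / \<alpha> = 0" using a by (simp add: field_simps)
  finally show ?thesis using n by simp
qed

lemma Kf_at_top:
  assumes a: "0 < \<alpha>"
  shows "filterlim (\<lambda>n. real (Kf \<alpha> n)) at_top sequentially"
proof (rule filterlim_at_top_mono[of "\<lambda>n. log 2 (real n) / (2 * \<alpha>) - 1"])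
  show "filterlim (\<lambda>n. log 2 (real n) / (2 * \<alpha>) - 1) at_top sequentially"
  proof -
    have l: "filterlim (\<lambda>n. ln (real n)) at_top sequentially"
      by (rule filterlim_compose[OF ln_at_top filterlim_real_sequentially])
    have "filterlim (\<lambda>n. 1 / (ln 2 * (2 * \<alpha>)) * ln (real n)) at_top sequentially"
      by (rule filterlim_tendsto_pos_mult_at_top[OF tendsto_const _ l]) (use a in simp)
    hence "filterlim (\<lambda>n. -1 + 1 / (ln 2 * (2 * \<alpha>)) * ln (real n)) at_top sequentially"
      by (rule filterlim_tendsto_add_at_top[OF tendsto_const])
    thus ?thesis by (simp add: log_def field_simps)
  qed
  show "\<forall>\<^sub>F n in sequentially. log 2 (real n) / (2 * \<alpha>) - 1 \<le> real (Kf \<alpha> n)"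
  proof (rule eventually_sequentiallyI[of 1])
    fix n :: nat assume n: "1 \<le> n"
    have "0 \<le> log 2 (real n) / (2 * \<alpha>)" using n a by simp
    hence "real (Kf \<alpha> n) = real_of_int \<lfloor>log 2 (real n) / (2 * \<alpha>)\<rfloor>" unfolding Kf_def by simp
    thus "log 2 (real n) / (2 * \<alpha>) - 1 \<le> real (Kf \<alpha> n)" by linarith
  qed
qed

lemma funpow_measurable: "T \<in> measurable M M \<Longrightarrow> (T ^^ n) \<in> measurable M M"
  by (induction n) (auto intro: measurable_compose)

lemma distr_funpow:
  assumes T: "T \<in> measurable M M" and inv: "distr M M T = M"
  shows "distr M M (T ^^ n) = M"
proof (induction n)
  case 0 thus ?case by (simp add: distr_id2)
next
  case (Suc n)
  have "distr M M (T ^^ Suc n) = distr M M ((T ^^ n) \<circ> T)" by (simp only: funpow_Suc_right)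
  also have "\<dots> = distr (distr M M T) M (T ^^ n)"
    by (rule distr_distr[symmetric]) (auto intro: funpow_measurable T)
  also have "\<dots> = M" using inv Suc by simp
  finally show ?case .
qed

lemma Ks_eq:
  "{k::nat. 1 \<le> k \<and> real k \<le> y} = {1..nat \<lfloor>y\<rfloor>}"
proof safe
  fix k :: nat assume "1 \<le> k" "real k \<le> y"
  thus "k \<in> {1..nat \<lfloor>y\<rfloor>}" by (auto simp: le_nat_iff le_floor_iff)
next
  fix k :: nat assume k: "k \<in> {1..nat \<lfloor>y\<rfloor>}"
  hence "int k \<le> \<lfloor>y\<rfloor>" by (auto simp: le_nat_iff)
  thus "real k \<le> y" by (simp add: le_floor_iff)
qed (auto)

lemma birk_abs_le:
  assumes "m \<le> n"
  shows "\<bar>birk T m h x\<bar> \<le> (\<Sum>j<n. \<bar>h ((T ^^ j) x)\<bar>)"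
proof -
  have "\<bar>birk T m h x\<bar> \<le> (\<Sum>j<m. \<bar>h ((T ^^ j) x)\<bar>)" unfolding birk_def by (rule sum_abs)
  also have "\<dots> \<le> (\<Sum>j<n. \<bar>h ((T ^^ j) x)\<bar>)" using assms by (intro sum_mono2) auto
  finally show ?thesis .
qed

theorem lemma3p2:
  fixes M :: "'a measure" and T :: "'a \<Rightarrow> 'a" and \<alpha> :: real
    and f :: "nat \<Rightarrow> 'a \<Rightarrow> real"
    and P :: "'b measure" and X :: "nat \<Rightarrow> nat \<Rightarrow> 'b \<Rightarrow> real"
  assumes M: "prob_space M"
    and erg: "ergodic_mp M T"
    and aper: "aperiodic M T"
    and alpha: "0 < \<alpha>" "\<alpha> < 1"
    and P: "prob_space P"
    and Xindep: "prob_space.indep_vars P (\<lambda>_. borel) (\<lambda>(k, m). X k m) {(k, m). 1 \<le> k \<and> 1 \<le> m}"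
    and Xlaw: "\<And>k m. 1 \<le> k \<Longrightarrow> 1 \<le> m \<Longrightarrow>
                 stable_law \<alpha> (real k powr (- 1 / \<alpha>)) 1 0 (distr P borel (X k m))"
    and fmeas: "\<And>k. f k \<in> borel_measurable M"
    and adm: "distr M (PiM adm_index (\<lambda>_. borel))
                  (\<lambda>x. \<lambda>i\<in>adm_index. f (fst i) ((T ^^ snd i) x))
              = distr P (PiM adm_index (\<lambda>_. borel))
                  (\<lambda>\<omega>. \<lambda>i\<in>adm_index. Zdisc (fst i) (X (fst i) (snd i + 1) \<omega>))"
  shows "\<forall>\<epsilon>>0. (\<lambda>n. measure M {x \<in> space M. (SUP t\<in>{0..1}. \<bar>WS \<alpha> T n f t x\<bar>) > \<epsilon>})
                  \<longlonglongrightarrow> 0"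
proof (intro allI impI)
  fix \<epsilon> :: real assume eps: "\<epsilon> > 0"
  interpret M: prob_space M by (rule M)
  interpret P: prob_space P by (rule P)
  have Tm: "T \<in> measurable M M" and Tinv: "distr M M T = M" using erg by (auto simp: ergodic_mp_def)
  define D where "D = (PiM adm_index (\<lambda>_. borel) :: ((nat \<times> nat) \<Rightarrow> real) measure)"
  define F where "F = (\<lambda>x. \<lambda>i\<in>adm_index. f (fst i) ((T ^^ snd i) x))"
  define G where "G = (\<lambda>\<omega>. \<lambda>i\<in>adm_index. Zdisc (fst i) (X (fst i) (snd i + 1) \<omega>))"
  have adm': "distr M D F = distr P D G" using adm unfolding D_def F_def G_def .
  have Xm: "X k m \<in> borel_measurable P" if "1 \<le> k" "1 \<le> m" for k m
  proof -
    have "\<forall>i\<in>{(k, m). 1 \<le> k \<and> 1 \<le> m}. (\<lambda>(k, m). X k m) i \<in> measurable P borel"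
      using Xindep unfolding P.indep_vars_def by blast
    thus ?thesis using that by auto
  qed
  have Fm: "F \<in> measurable M D"
    unfolding D_def F_def
    by (intro measurable_restrict) (auto intro: measurable_compose[OF funpow_measurable[OF Tm] fmeas])
  have Gm: "G \<in> measurable P D"
    unfolding D_def G_def
    by (intro measurable_restrict) (auto simp: adm_index_def intro!: measurable_compose[OF Xm Zdisc_measurable])
  define a where "a = qa \<alpha> ^ 2"
  have a1: "a > 1" using qa_gt1[OF alpha(2)] unfolding a_def by (simp add: one_less_power)
  have key: "integrable M (\<lambda>x. \<bar>f k x\<bar>) \<and> (\<integral>x. \<bar>f k x\<bar> \<partial>M) \<le> Cz \<alpha> * a ^ k / real k"
    if k: "1 \<le> k" for k
  proof -
    have idx: "(k, 0) \<in> adm_index" using k by (simp add: adm_index_def dseq_def)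
    have pm: "(\<lambda>\<omega>. \<bar>\<omega> (k, 0)\<bar>) \<in> borel_measurable D"
      unfolding D_def by (intro borel_measurable_abs measurable_component_singleton idx)
    have ZX: "(\<lambda>\<omega>. Zdisc k (X k 1 \<omega>)) \<in> borel_measurable P"
      using Xm[OF k] by measurable
    have bnd: "\<bar>Zdisc k y\<bar> \<le> 4 ^ k" for y
    proof -
      have "Ytr k y \<le> 4 ^ k" by (simp add: Ytr_def)
      thus ?thesis using Zdisc_nonneg[of k y] Zdisc_le_Ytr[of k y] by simp
    qed
    have intP: "integrable P (\<lambda>\<omega>. Zdisc k (X k 1 \<omega>))"
      using bnd ZX by (intro P.integrable_const_bound[where B="4^k"]) auto
    have "integrable (distr P D G) (\<lambda>\<omega>. \<bar>\<omega> (k, 0)\<bar>)"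
      using intP idx Zdisc_nonneg by (subst integrable_distr_eq[OF Gm pm]) (simp add: G_def)
    hence "integrable (distr M D F) (\<lambda>\<omega>. \<bar>\<omega> (k, 0)\<bar>)" using adm' by simp
    hence i1: "integrable M (\<lambda>x. \<bar>f k x\<bar>)"
      using idx by (subst (asm) integrable_distr_eq[OF Fm pm]) (simp add: F_def)
    have "(\<integral>x. \<bar>f k x\<bar> \<partial>M) = integral\<^sup>L (distr M D F) (\<lambda>\<omega>. \<bar>\<omega> (k, 0)\<bar>)"
      using idx by (subst integral_distr[OF Fm pm]) (simp add: F_def)
    also have "\<dots> = integral\<^sup>L (distr P D G) (\<lambda>\<omega>. \<bar>\<omega> (k, 0)\<bar>)" using adm' by simp
    also have "\<dots> = (\<integral>\<omega>. Zdisc k (X k 1 \<omega>) \<partial>P)"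
      using idx Zdisc_nonneg by (subst integral_distr[OF Gm pm]) (simp add: G_def)
    also have "\<dots> = (\<integral>y. Zdisc k y \<partial>distr P borel (X k 1))"
      by (rule integral_distr[symmetric]) (use Xm[OF k] in auto)
    also have "\<dots> \<le> Cz \<alpha> * a ^ k / real k"
      unfolding a_def using Xlaw[OF k, of 1] alpha k by (intro EZ_bound) auto
    finally show ?thesis using i1 by simp
  qed
  have shift: "integrable M (\<lambda>x. \<bar>f k ((T ^^ j) x)\<bar>) \<and>
      (\<integral>x. \<bar>f k ((T ^^ j) x)\<bar> \<partial>M) = (\<integral>x. \<bar>f k x\<bar> \<partial>M)" if k: "1 \<le> k" for k j
  proof -
    have dj: "distr M M (T ^^ j) = M" by (rule distr_funpow[OF Tm Tinv])
    have gm: "(\<lambda>x. \<bar>f k x\<bar>) \<in> borel_measurable M" using fmeas by measurable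
    have "integrable M (\<lambda>x. \<bar>f k ((T ^^ j) x)\<bar>)"
      using key[OF k] dj integrable_distr_eq[OF funpow_measurable[OF Tm] gm, of j] by simp
    moreover have "(\<integral>x. \<bar>f k ((T ^^ j) x)\<bar> \<partial>M) = (\<integral>x. \<bar>f k x\<bar> \<partial>M)"
      using integral_distr[OF funpow_measurable[OF Tm] gm, of j] dj by simp
    ultimately show ?thesis by blast
  qed
  define Gn where "Gn = (\<lambda>n x. real n powr (-1/\<alpha>) * (\<Sum>k\<in>{1..Kf \<alpha> n}. \<Sum>j<n. \<bar>f k ((T ^^ j) x)\<bar>))"
  have Ks: "{k::nat. 1 \<le> k \<and> real k \<le> log 2 (real n) / (2 * \<alpha>)} = {1..Kf \<alpha> n}" for n
    unfolding Kf_def by (rule Ks_eq)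
  have Gint: "integrable M (Gn n)" for n
    unfolding Gn_def using shift by (intro integrable_mult_right Bochner_Integration.integrable_sum) auto
  have Gnn: "0 \<le> Gn n x" for n x unfolding Gn_def by (intro mult_nonneg_nonneg sum_nonneg) auto
  define c where "c = Cz \<alpha> * Sa a"
  have c0: "0 \<le> c"
  proof -
    have "0 \<le> Cz \<alpha>" using qa_gt1[OF alpha(2)] by (simp add: Cz_def)
    moreover have "0 \<le> Sa a" unfolding Sa_def using a1
      by (intro suminf_nonneg Sa_summable) auto
    ultimately show ?thesis by (simp add: c_def)
  qed
  have EG: "(\<integral>x. Gn n x \<partial>M) \<le> c / real (Kf \<alpha> n)" if n: "1 \<le> n" for n
  proof -
    have "(\<integral>x. Gn n x \<partial>M) = real n powr (-1/\<alpha>) * (\<Sum>k\<in>{1..Kf \<alpha> n}. \<Sum>j<n. (\<integral>x. \<bar>f k ((T ^^ j) x)\<bar> \<partial>M))"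
      unfolding Gn_def using shift
      by (simp add: Bochner_Integration.integral_sum)
    also have "\<dots> = real n powr (-1/\<alpha>) * (\<Sum>k\<in>{1..Kf \<alpha> n}. real n * (\<integral>x. \<bar>f k x\<bar> \<partial>M))"
      using shift by simp
    also have "\<dots> \<le> real n powr (-1/\<alpha>) * (\<Sum>k\<in>{1..Kf \<alpha> n}. real n * (Cz \<alpha> * a ^ k / real k))"
      using key by (intro mult_left_mono sum_mono) auto
    also have "\<dots> = Cz \<alpha> * (real n powr (1 - 1/\<alpha>) * (\<Sum>k\<in>{1..Kf \<alpha> n}. a ^ k / real k))"
    proof -
      have "real n powr (-1/\<alpha>) * real n = real n powr (1 - 1/\<alpha>)"
        using n by (simp add: powr_diff powr_minus_divide)
      moreover have "(\<Sum>k\<in>{1..Kf \<alpha> n}. real n * (Cz \<alpha> * a ^ k / real k)) = real n * Cz \<alpha> * (\<Sum>k\<in>{1..Kf \<alpha> n}. a ^ k / real k)"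
        by (simp add: sum_distrib_left field_simps)
      ultimately show ?thesis by (simp add: mult_ac)
    qed
    also have "\<dots> \<le> Cz \<alpha> * (real n powr (1 - 1/\<alpha>) * (Sa a * a ^ Kf \<alpha> n / real (Kf \<alpha> n)))"
      using sum_bound[OF a1] qa_gt1[OF alpha(2)]
      by (intro mult_left_mono) (auto simp: Cz_def)
    also have "\<dots> = c * (real n powr (1 - 1/\<alpha>) * a ^ Kf \<alpha> n) / real (Kf \<alpha> n)"
      by (simp add: c_def)
    also have "\<dots> \<le> c * 1 / real (Kf \<alpha> n)"
      using pow_bound[OF alpha n] c0 unfolding a_def
      by (intro divide_right_mono mult_left_mono) auto
    finally show ?thesis by simp
  qed
  have ptw: "(SUP t\<in>{0..1}. \<bar>WS \<alpha> T n f t x\<bar>) \<le> Gn n x" for n x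
  proof (rule cSUP_least)
    fix t :: real assume t: "t \<in> {0..1}"
    have m: "nat \<lfloor>real n * t\<rfloor> \<le> n"
    proof -
      have "real n * t \<le> real n" using t by (simp add: mult_left_le)
      hence "\<lfloor>real n * t\<rfloor> \<le> int n" by (simp add: floor_le_iff)
      thus ?thesis by simp
    qed
    have "\<bar>WS \<alpha> T n f t x\<bar> \<le> (\<Sum>k\<in>{1..Kf \<alpha> n}. \<bar>Wproc \<alpha> T n (f k) t x\<bar>)"
      unfolding WS_def Ks by (rule sum_abs)
    also have "\<dots> \<le> (\<Sum>k\<in>{1..Kf \<alpha> n}. real n powr (-1/\<alpha>) * (\<Sum>j<n. \<bar>f k ((T ^^ j) x)\<bar>))"
    proof (rule sum_mono)
      fix k
      have "\<bar>birk T (nat \<lfloor>real n * t\<rfloor>) (f k) x\<bar> \<le> (\<Sum>j<n. \<bar>f k ((T ^^ j) x)\<bar>)"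
        by (rule birk_abs_le[OF m])
      hence "real n powr (-1/\<alpha>) * \<bar>birk T (nat \<lfloor>real n * t\<rfloor>) (f k) x\<bar> \<le> real n powr (-1/\<alpha>) * (\<Sum>j<n. \<bar>f k ((T ^^ j) x)\<bar>)"
        by (rule mult_left_mono) simp
      thus "\<bar>Wproc \<alpha> T n (f k) t x\<bar> \<le> real n powr (-1/\<alpha>) * (\<Sum>j<n. \<bar>f k ((T ^^ j) x)\<bar>)"
        unfolding Wproc_def abs_mult by simp
    qed
    also have "\<dots> = Gn n x" unfolding Gn_def by (simp add: sum_distrib_left)
    finally show "\<bar>WS \<alpha> T n f t x\<bar> \<le> Gn n x" .
  qed simp
  have bound: "measure M {x \<in> space M. (SUP t\<in>{0..1}. \<bar>WS \<alpha> T n f t x\<bar>) > \<epsilon>} \<le> c / \<epsilon> / real (Kf \<alpha> n)"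
    if n: "1 \<le> n" for n
  proof -
    let ?A = "{x \<in> space M. (SUP t\<in>{0..1}. \<bar>WS \<alpha> T n f t x\<bar>) > \<epsilon>}"
    let ?B = "{x \<in> space M. Gn n x \<ge> \<epsilon>}"
    have sub: "?A \<subseteq> ?B" using ptw by (auto intro: order_trans[OF less_imp_le])
    have "measure M ?A \<le> measure M ?B"
    proof (cases "?A \<in> sets M")
      case True
      have "?B \<in> sets M" using Gint[of n] by measurable
      thus ?thesis using True sub by (intro M.finite_measure_mono) auto
    qed (simp add: measure_notin_sets)
    also have "\<dots> \<le> (\<integral>x. Gn n x \<partial>M) / \<epsilon>"
      by (rule integral_Markov_inequality_measure[OF Gint, of "space M"]) (use eps Gnn in auto)
    also have "\<dots> \<le> (c / real (Kf \<alpha> n)) / \<epsilon>"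
      using EG[OF n] eps by (intro divide_right_mono) auto
    finally show ?thesis by (simp add: mult.commute)
  qed
  have lim: "(\<lambda>n. c / \<epsilon> / real (Kf \<alpha> n)) \<longlonglongrightarrow> 0"
    by (rule tendsto_divide_0[OF tendsto_const filterlim_at_top_imp_at_infinity[OF Kf_at_top[OF alpha(1)]]])
  show "(\<lambda>n. measure M {x \<in> space M. (SUP t\<in>{0..1}. \<bar>WS \<alpha> T n f t x\<bar>) > \<epsilon>}) \<longlonglongrightarrow> 0"
  proof (rule tendsto_sandwich[OF _ _ tendsto_const lim])
    show "\<forall>\<^sub>F n in sequentially. 0 \<le> measure M {x \<in> space M. (SUP t\<in>{0..1}. \<bar>WS \<alpha> T n f t x\<bar>) > \<epsilon>}"
      by simp
    show "\<forall>\<^sub>F n in sequentially. measure M {x \<in> space M. (SUP t\<in>{0..1}. \<bar>WS \<alpha> T n f t x\<bar>) > \<epsilon>} \<le> c / \<epsilon> / real (Kf \<alpha> n)"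
      using bound by (intro eventually_sequentiallyI[of 1]) auto
  qed
qed

end
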